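(* Let $\varepsilon>0$, $0<\tau\le\varepsilon$ and $\lambda:=\tau/\varepsilon$. Let $u_n\in\mathcal V_{[0,1]}$ and let $(u_{n+1},\beta_{n+1})$ with $\beta_{n+1}\in\mathcal B(u_{n+1})$ satisfy \[ u_{n+1} -e^{-\tau\Delta}u_n-\lambda u_{n+1}+\lambda\overline{u_{n+1}}\mathbf{1} =\lambda\beta_{n+1} -\lambda\overline{\beta_{n+1}}\mathbf{1}. \] Suppose $\bar u:=\overline{u_n}=\overline{u_{n+1}}\in(0,1)$. Then $(\beta_{n+1})_i-\overline{\beta_{n+1}}\in[\bar u-1,\bar u]$ and $(\beta_{n+1})_i\in[-1,1]$ for all $i\in V$.
   Context: $G=(V,E)$ is a finite, simple, connected, undirected graph with weights $\omega_{ij}=\omega_{ji}>0$ for $ij\in E$, $\omega_{ij}=0$ otherwise; $d_i=\sum_j\omega_{ij}$, $r\in[0,1]$ fixed. $\mathcal V$ = functions $V\to\mathbb R$ with $\langle u,v\rangle_{\mathcal V}=\sum_i u_iv_id_i^r$; $\mathcal V_{[0,1]}$ = functions $V\to[0,1]$. $(\Delta u)_i=d_i^{-r}\sum_j\omega_{ij}(u_i-u_j)$, $e^{-\tau\Delta}$ its matrix exponential. $\mathbf 1$ all-ones; $\mathcal M(u)=\langle u,\mathbf 1\rangle_{\mathcal V}$; $\bar v=\mathcal M(v)/\mathcal M(\mathbf 1)$. For $u\in\mathcal V_{[0,1]}$, $\mathcal B(u)$ = set of $\beta\in\mathcal V$ with $\beta_i\ge0$ if $u_i=0$, $\beta_i=0$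 if $0<u_i<1$, $\beta_i\le0$ if $u_i=1$; $\mathcal B(u)=\emptyset$ otherwise. *)

theory Defs
  imports "HOL-Analysis.Analysis"
begin

definition weighted_graph :: "('v::finite \<Rightarrow> 'v \<Rightarrow> real) \<Rightarrow> bool" where
  "weighted_graph w \<longleftrightarrow>
     (\<forall>i j. w i j = w j i) \<and> (\<forall>i j. w i j \<ge> 0) \<and> (\<forall>i. w i i = 0) \<and>
     (\<forall>i j. (\<lambda>a b. w a b > 0)\<^sup>*\<^sup>* i j)"

definition deg :: "('v::finite \<Rightarrow> 'v \<Rightarrow> real) \<Rightarrow> 'v \<Rightarrow> real" where
  "deg w i = (\<Sum>j\<in>UNIV. w i j)"

definition graph_laplacian :: "('v::finite \<Rightarrow> 'v \<Rightarrow> real) \<Rightarrow> real \<Rightarrow> ('v \<Rightarrow> real) \<Rightarrow> ('v \<Rightarrow> real)" where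
  "graph_laplacian w r u = (\<lambda>i. inverse (deg w i powr r) * (\<Sum>j\<in>UNIV. w i j * (u i - u j)))"

definition heat_semigroup :: "('v::finite \<Rightarrow> 'v \<Rightarrow> real) \<Rightarrow> real \<Rightarrow> real \<Rightarrow> ('v \<Rightarrow> real) \<Rightarrow> ('v \<Rightarrow> real)" where
  "heat_semigroup w r \<tau> u = (\<lambda>i. \<Sum>k. ((- \<tau>) ^ k / fact k) * ((graph_laplacian w r ^^ k) u) i)"

definition mass :: "('v::finite \<Rightarrow> 'v \<Rightarrow> real) \<Rightarrow> real \<Rightarrow> ('v \<Rightarrow> real) \<Rightarrow> real" where
  "mass w r u = (\<Sum>i\<in>UNIV. u i * deg w i powr r)"

definition avg :: "('v::finite \<Rightarrow> 'v \<Rightarrow> real) \<Rightarrow> real \<Rightarrow> ('v \<Rightarrow> real) \<Rightarrow> real" where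
  "avg w r v = mass w r v / mass w r (\<lambda>_. 1)"

definition in_B :: "('v \<Rightarrow> real) \<Rightarrow> ('v \<Rightarrow> real) \<Rightarrow> bool" where
  "in_B u \<beta> \<longleftrightarrow> (\<forall>i. 0 \<le> u i \<and> u i \<le> 1) \<and>
     (\<forall>i. (u i = 0 \<longrightarrow> \<beta> i \<ge> 0) \<and> (0 < u i \<and> u i < 1 \<longrightarrow> \<beta> i = 0) \<and> (u i = 1 \<longrightarrow> \<beta> i \<le> 0))"

end

theory Submission imports Defs begin

definition pp :: "('v::finite \<Rightarrow> 'v \<Rightarrow> real) \<Rightarrow> real \<Rightarrow> 'v \<Rightarrow> real" where
  "pp w r i = inverse (deg w i powr r)"
definition aa :: "('v::finite \<Rightarrow> 'v \<Rightarrow> real) \<Rightarrow> real \<Rightarrow> 'v \<Rightarrow> real" where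
  "aa w r i = pp w r i * deg w i"
definition MM :: "('v::finite \<Rightarrow> 'v \<Rightarrow> real) \<Rightarrow> real \<Rightarrow> real" where
  "MM w r = (\<Sum>i\<in>UNIV. aa w r i)"
definition NN :: "('v::finite \<Rightarrow> 'v \<Rightarrow> real) \<Rightarrow> real \<Rightarrow> ('v \<Rightarrow> real) \<Rightarrow> ('v \<Rightarrow> real)" where
  "NN w r v = (\<lambda>i. (MM w r - aa w r i) * v i + pp w r i * (\<Sum>j\<in>UNIV. w i j * v j))"

lemma lap_eq: "graph_laplacian w r v = (\<lambda>i. MM w r * v i - NN w r v i)"
  unfolding graph_laplacian_def NN_def aa_def pp_def deg_def
  by (auto simp: algebra_simps sum_subtractf sum_distrib_left sum_distrib_right)

lemma NN_lin: "NN w r (\<lambda>i. \<Sum>j\<in>S. c j * f j i) i = (\<Sum>j\<in>S. c j * NN w r (f j) i)"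
proof -
  have "(\<Sum>l\<in>UNIV. w i l * (\<Sum>j\<in>S. c j * f j l)) = (\<Sum>j\<in>S. c j * (\<Sum>l\<in>UNIV. w i l * f j l))"
    by (simp add: sum_distrib_left sum.swap[of _ UNIV S] algebra_simps)
  then have "NN w r (\<lambda>i. \<Sum>j\<in>S. c j * f j i) i = (\<Sum>j\<in>S. (MM w r - aa w r i) * (c j * f j i)) + (\<Sum>j\<in>S. pp w r i * (c j * (\<Sum>l\<in>UNIV. w i l * f j l)))"
    unfolding NN_def by (simp add: sum_distrib_left)
  also have "\<dots> = (\<Sum>j\<in>S. c j * NN w r (f j) i)"
    unfolding NN_def sum.distrib[symmetric] by (rule sum.cong) (auto simp: algebra_simps)
  finally show ?thesis .
qed

lemma pascal:
  fixes g :: "nat \<Rightarrow> real"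
  shows "M * (\<Sum>j\<le>k. real (k choose j) * M^(k-j) * g j) + (\<Sum>j\<le>k. real (k choose j) * M^(k-j) * g (Suc j))
    = (\<Sum>j\<le>Suc k. real (Suc k choose j) * M^(Suc k-j) * g j)"
proof -
  have A: "(\<Sum>j\<le>Suc k. real (Suc k choose j) * M^(Suc k-j) * g j)
     = M^(Suc k) * g 0 + (\<Sum>j\<le>k. real (k choose j) * M^(k-j) * g (Suc j)) + (\<Sum>j\<le>k. real (k choose Suc j) * M^(k-j) * g (Suc j))"
    by (subst sum.atMost_Suc_shift) (simp add: sum.distrib algebra_simps)
  have B: "M * (\<Sum>j\<le>k. real (k choose j) * M^(k-j) * g j) = (\<Sum>j\<le>Suc k. real (k choose j) * M^(Suc k-j) * g j)"
    by (simp add: sum_distrib_left algebra_simps Suc_diff_le)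
  also have "\<dots> = M^(Suc k) * g 0 + (\<Sum>j\<le>k. real (k choose Suc j) * M^(k-j) * g (Suc j))"
    by (subst sum.atMost_Suc_shift) simp
  finally show ?thesis using A by simp
qed

lemma binom:
  "(graph_laplacian w r ^^ k) u i = (\<Sum>j\<le>k. real (k choose j) * MM w r^(k-j) * ((-1)^j * (NN w r ^^ j) u i))"
proof (induction k arbitrary: i)
  case 0
  then show ?case by simp
next
  case (Suc k)
  have e: "(graph_laplacian w r ^^ k) u = (\<lambda>i. \<Sum>j\<le>k. (real (k choose j) * MM w r^(k-j) * (-1)^j) * (NN w r ^^ j) u i)"
    using Suc.IH by (auto simp: algebra_simps)
  have "(graph_laplacian w r ^^ Suc k) u i = MM w r * (graph_laplacian w r ^^ k) u i - NN w r ((graph_laplacian w r ^^ k) u) i"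
    by (simp add: lap_eq)
  also have "NN w r ((graph_laplacian w r ^^ k) u) i = (\<Sum>j\<le>k. (real (k choose j) * MM w r^(k-j) * (-1)^j) * (NN w r ^^ Suc j) u i)"
    by (subst e, subst NN_lin) simp
  also have "\<dots> = - (\<Sum>j\<le>k. real (k choose j) * MM w r^(k-j) * ((-1)^(Suc j) * (NN w r ^^ Suc j) u i))"
    by (simp add: sum_negf[symmetric] algebra_simps)
  finally show ?case
    using pascal[of "MM w r" k "\<lambda>j. (-1)^j * (NN w r ^^ j) u i"] Suc.IH
    by (simp del: funpow.simps)
qed


lemma wg_nonneg: "weighted_graph w \<Longrightarrow> 0 \<le> w i j"
  unfolding weighted_graph_def by auto

lemma deg_nonneg: "weighted_graph w \<Longrightarrow> 0 \<le> deg w i"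
  unfolding deg_def by (auto intro: sum_nonneg wg_nonneg)

lemma pp_nonneg: "weighted_graph w \<Longrightarrow> 0 \<le> pp w r i"
  unfolding pp_def using deg_nonneg by auto

lemma aa_nonneg: "weighted_graph w \<Longrightarrow> 0 \<le> aa w r i"
  unfolding aa_def using deg_nonneg[of w i] pp_nonneg[of w r i] by auto

lemma aa_le: "weighted_graph w \<Longrightarrow> aa w r i \<le> MM w r"
  unfolding MM_def by (rule member_le_sum) (auto simp: aa_nonneg)

lemma MM_nonneg: "weighted_graph w \<Longrightarrow> 0 \<le> MM w r"
  using aa_le aa_nonneg order_trans by blast

lemma NN_bound:
  assumes wg: "weighted_graph w" and v: "\<forall>i. 0 \<le> v i \<and> v i \<le> C"
  shows "0 \<le> NN w r v i \<and> NN w r v i \<le> MM w r * C"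
proof -
  have s0: "0 \<le> (\<Sum>j\<in>UNIV. w i j * v j)" using v wg_nonneg[OF wg] by (auto intro: sum_nonneg)
  have s1: "(\<Sum>j\<in>UNIV. w i j * v j) \<le> (\<Sum>j\<in>UNIV. w i j * C)"
    using v wg_nonneg[OF wg] by (auto intro!: sum_mono mult_left_mono)
  have s2: "(\<Sum>j\<in>UNIV. w i j * C) = deg w i * C" unfolding deg_def by (simp add: sum_distrib_right)
  have p: "0 \<le> pp w r i" using pp_nonneg[OF wg] .
  have a: "aa w r i \<le> MM w r" using aa_le[OF wg] .
  have t1: "0 \<le> (MM w r - aa w r i) * v i" using a v by auto
  have t2: "(MM w r - aa w r i) * v i \<le> (MM w r - aa w r i) * C" using a v by (auto intro: mult_left_mono)
  have t3: "pp w r i * (\<Sum>j\<in>UNIV. w i j * v j) \<le> pp w r i * (deg w i * C)"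
    using s1 s2 p by (metis mult_left_mono)
  have t4: "0 \<le> pp w r i * (\<Sum>j\<in>UNIV. w i j * v j)" using p s0 by auto
  show ?thesis unfolding NN_def using t1 t2 t3 t4 by (simp add: aa_def algebra_simps)
qed

lemma NN_pow_bound:
  assumes wg: "weighted_graph w" and u: "\<forall>i. 0 \<le> u i \<and> u i \<le> 1"
  shows "0 \<le> (NN w r ^^ j) u i \<and> (NN w r ^^ j) u i \<le> MM w r ^ j"
proof (induction j arbitrary: i)
  case 0 then show ?case using u by simp
next
  case (Suc j)
  show ?case using NN_bound[OF wg, of "(NN w r ^^ j) u" "MM w r ^ j" r i] Suc.IH by simp
qed

lemma term_eq:
  "(- \<tau>) ^ k / fact k * (graph_laplacian w r ^^ k) u i
   = (\<Sum>j\<le>k. (\<tau>^j / fact j * (NN w r ^^ j) u i) * ((- \<tau> * MM w r)^(k-j) / fact (k-j)))"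
proof -
  have "(- \<tau>) ^ k / fact k * (graph_laplacian w r ^^ k) u i
     = (\<Sum>j\<le>k. (- \<tau>) ^ k / fact k * (real (k choose j) * MM w r^(k-j) * ((-1)^j * (NN w r ^^ j) u i)))"
    by (simp add: binom sum_distrib_left)
  also have "\<dots> = (\<Sum>j\<le>k. (\<tau>^j / fact j * (NN w r ^^ j) u i) * ((- \<tau> * MM w r)^(k-j) / fact (k-j)))"
  proof (rule sum.cong)
    fix j assume "j \<in> {..k}"
    then have jk: "j \<le> k" by simp
    have c: "real (k choose j) = fact k / (fact j * fact (k - j))" using binomial_fact[OF jk] by simp
    have pw: "(- \<tau>) ^ k = (- \<tau>)^j * (- \<tau>)^(k-j)" using jk by (simp flip: power_add)
    have m1: "(- \<tau>)^j * (-1)^j = \<tau>^j" by (simp flip: power_mult_distrib)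
    show "(- \<tau>) ^ k / fact k * (real (k choose j) * MM w r^(k-j) * ((-1)^j * (NN w r ^^ j) u i))
        = (\<tau>^j / fact j * (NN w r ^^ j) u i) * ((- \<tau> * MM w r)^(k-j) / fact (k-j))"
      unfolding c pw power_mult_distrib using m1
      by (simp add: field_simps)
  qed simp
  finally show ?thesis .
qed

lemma heat_repr:
  assumes wg: "weighted_graph w" and u: "\<forall>i. 0 \<le> u i \<and> u i \<le> 1" and t: "0 \<le> \<tau>"
  shows "heat_semigroup w r \<tau> u i = (\<Sum>j. \<tau>^j / fact j * (NN w r ^^ j) u i) * exp (- \<tau> * MM w r)
     \<and> 0 \<le> (\<Sum>j. \<tau>^j / fact j * (NN w r ^^ j) u i)
     \<and> (\<Sum>j. \<tau>^j / fact j * (NN w r ^^ j) u i) \<le> exp (\<tau> * MM w r)"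
proof -
  define a where "a j = \<tau>^j / fact j * (NN w r ^^ j) u i" for j
  define b where "b m = (- \<tau> * MM w r)^m / fact m" for m
  define e where "e j = (\<tau> * MM w r)^j / fact j" for j
  have a0: "0 \<le> a j" for j using NN_pow_bound[OF wg u, where r=r and j=j and i=i] t unfolding a_def by auto
  have ae: "a j \<le> e j" for j
    using NN_pow_bound[OF wg u, where r=r and j=j and i=i] t unfolding a_def e_def
    by (auto simp: power_mult_distrib divide_right_mono mult_left_mono)
  have es: "e sums exp (\<tau> * MM w r)"
    using exp_converges[of "\<tau> * MM w r"] unfolding e_def by (simp add: divide_inverse mult.commute)
  have bs: "b sums exp (- \<tau> * MM w r)"
    using exp_converges[of "- \<tau> * MM w r"] unfolding b_def by (simp add: divide_inverse mult.commute)
  have sa: "summable a"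
    by (rule summable_comparison_test[of a e]) (use a0 ae es in \<open>auto simp: sums_iff\<close>)
  have sna: "summable (\<lambda>k. norm (a k))" using sa a0 by simp
  have snb: "summable (\<lambda>k. norm (b k))"
    using summable_norm_exp[of "- \<tau> * MM w r"] unfolding b_def by (simp add: divide_inverse mult.commute)
  have "heat_semigroup w r \<tau> u i = (\<Sum>k. \<Sum>j\<le>k. a j * b (k - j))"
    unfolding heat_semigroup_def a_def b_def by (subst term_eq) (rule refl)
  also have "\<dots> = (\<Sum>k. a k) * (\<Sum>k. b k)" using Cauchy_product[OF sna snb] by simp
  also have "(\<Sum>k. b k) = exp (- \<tau> * MM w r)" using bs by (simp add: sums_iff)
  finally have 1: "heat_semigroup w r \<tau> u i = (\<Sum>k. a k) * exp (- \<tau> * MM w r)" .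
  have 2: "0 \<le> (\<Sum>k. a k)" using sa a0 by (simp add: suminf_nonneg)
  have 3: "(\<Sum>k. a k) \<le> exp (\<tau> * MM w r)"
    using suminf_le[of a e] sa es ae by (simp add: sums_iff)
  show ?thesis using 1 2 3 unfolding a_def by simp
qed

lemma heat_bounds:
  assumes wg: "weighted_graph w" and u: "\<forall>i. 0 \<le> u i \<and> u i \<le> 1" and t: "0 \<le> \<tau>"
  shows "0 \<le> heat_semigroup w r \<tau> u i \<and> heat_semigroup w r \<tau> u i \<le> 1"
proof -
  obtain S where S: "heat_semigroup w r \<tau> u i = S * exp (- \<tau> * MM w r)" "0 \<le> S" "S \<le> exp (\<tau> * MM w r)"
    using heat_repr[OF wg u t, of r i] by blast
  have "S * exp (- \<tau> * MM w r) \<le> exp (\<tau> * MM w r) * exp (- \<tau> * MM w r)"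
    using S by (intro mult_right_mono) auto
  also have "\<dots> = 1" by (simp flip: exp_add)
  finally show ?thesis using S by simp
qed


theorem lemma38:
  fixes w :: "'v::finite \<Rightarrow> 'v \<Rightarrow> real" and r \<epsilon> \<tau> :: real
    and u0 u1 \<beta> :: "'v \<Rightarrow> real"
  assumes "weighted_graph w"
    and "0 \<le> r" "r \<le> 1"
    and "\<epsilon> > 0" "0 < \<tau>" "\<tau> \<le> \<epsilon>"
    and "\<forall>i. 0 \<le> u0 i \<and> u0 i \<le> 1"
    and "in_B u1 \<beta>"
    and "\<forall>i. u1 i - heat_semigroup w r \<tau> u0 i - (\<tau> / \<epsilon>) * u1 i + (\<tau> / \<epsilon>) * avg w r u1
              = (\<tau> / \<epsilon>) * \<beta> i - (\<tau> / \<epsilon>) * avg w r \<beta>"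
    and "avg w r u0 = avg w r u1"
    and "0 < avg w r u1" "avg w r u1 < 1"
  shows "\<forall>i. avg w r u1 - 1 \<le> \<beta> i - avg w r \<beta> \<and> \<beta> i - avg w r \<beta> \<le> avg w r u1
           \<and> -1 \<le> \<beta> i \<and> \<beta> i \<le> 1"
proof -
  note wg = assms(1)
  define ub where "ub = avg w r u1"
  define c where "c = avg w r \<beta>"
  define l where "l = \<tau> / \<epsilon>"
  define p where "p i = deg w i powr r" for i
  define P where "P = (\<Sum>i\<in>UNIV. p i)"
  have l0: "0 < l" using assms(4,5) unfolding l_def by simp
  have l1: "l \<le> 1" using assms(4,6) unfolding l_def by simp
  have p0: "0 \<le> p i" for i unfolding p_def by simp
  have P0: "0 \<le> P" unfolding P_def using p0 by (simp add: sum_nonneg)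
  have mP: "mass w r (\<lambda>_. 1) = P" unfolding mass_def P_def p_def by simp
  have Pn: "P \<noteq> 0" using assms(11) unfolding avg_def mP by auto
  have Pp: "0 < P" using P0 Pn by simp
  have mu: "(\<Sum>i\<in>UNIV. u1 i * p i) = ub * P"
    using Pn unfolding ub_def avg_def mP by (simp add: mass_def p_def)
  have mb: "(\<Sum>i\<in>UNIV. \<beta> i * p i) = c * P"
    using Pn unfolding c_def avg_def mP by (simp add: mass_def p_def)
  have ub0: "0 < ub" "ub < 1" using assms(11,12) unfolding ub_def by auto
  have inB: "\<And>i. 0 \<le> u1 i \<and> u1 i \<le> 1" "\<And>i. u1 i = 0 \<Longrightarrow> \<beta> i \<ge> 0"
     "\<And>i. 0 < u1 i \<Longrightarrow> u1 i < 1 \<Longrightarrow> \<beta> i = 0" "\<And>i. u1 i = 1 \<Longrightarrow> \<beta> i \<le> 0"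
    using assms(8) unfolding in_B_def by auto
  have eq: "u1 i - heat_semigroup w r \<tau> u0 i - l * u1 i + l * ub = l * (\<beta> i - c)" for i
    using assms(9) unfolding l_def ub_def c_def by (simp add: algebra_simps)
  have hb: "0 \<le> heat_semigroup w r \<tau> u0 i \<and> heat_semigroup w r \<tau> u0 i \<le> 1" for i
    using heat_bounds[OF wg assms(7)] assms(5) by simp
  have hZ: "\<beta> i \<le> c + ub" if "u1 i = 0" for i
  proof -
    have "l * (\<beta> i - c) \<le> l * ub" using eq[of i] hb[of i] that by simp
    then have "\<beta> i - c \<le> ub" using l0 by simp
    then show ?thesis by simp
  qed
  have hO: "c + ub - 1 \<le> \<beta> i" if "u1 i = 1" for i
  proof -
    have "l * (ub - 1) \<le> l * (\<beta> i - c)" using eq[of i] hb[of i] that by (simp add: algebra_simps)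
    then have "ub - 1 \<le> \<beta> i - c" using l0 by simp
    then show ?thesis by simp
  qed
  have cases3: "u1 i = 0 \<or> (0 < u1 i \<and> u1 i < 1) \<or> u1 i = 1" for i
    using inB(1)[of i] by auto
  have c1: "c \<le> 1 - ub"
  proof (rule ccontr)
    assume "\<not> c \<le> 1 - ub"
    then have pos: "0 \<le> ub + c" using ub0 by simp
    have node: "\<beta> i * p i \<le> (ub + c) * (1 - u1 i) * p i" for i
    proof -
      have "\<beta> i \<le> (ub + c) * (1 - u1 i)"
        using cases3[of i] hZ[of i] inB(3,4)[of i] pos inB(1)[of i] by (auto intro: mult_nonneg_nonneg)
      then show ?thesis using p0[of i] by (rule mult_right_mono)
    qed
    have "c * P \<le> (\<Sum>i\<in>UNIV. (ub + c) * (1 - u1 i) * p i)"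
      unfolding mb[symmetric] by (rule sum_mono) (rule node)
    also have "\<dots> = (ub + c) * (P - ub * P)"
    proof -
      have "(\<Sum>i\<in>UNIV. (ub + c) * (1 - u1 i) * p i) = (ub + c) * ((\<Sum>i\<in>UNIV. p i) - (\<Sum>i\<in>UNIV. u1 i * p i))"
        by (simp add: sum_distrib_left sum_subtractf[symmetric] algebra_simps)
      then show ?thesis unfolding mu P_def .
    qed
    also have "\<dots> = ((ub + c) * (1 - ub)) * P" by (simp add: algebra_simps)
    finally have "c \<le> (ub + c) * (1 - ub)" using Pp by simp
    then have "ub * c \<le> ub * (1 - ub)" by (simp add: algebra_simps)
    then have "c \<le> 1 - ub" using ub0 by simp
    then show False using \<open>\<not> c \<le> 1 - ub\<close> by simp
  qed
  have c2: "- ub \<le> c"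
  proof (rule ccontr)
    assume "\<not> - ub \<le> c"
    then have neg: "c - 1 + ub \<le> 0" using ub0 by simp
    have node: "(c - 1 + ub) * u1 i * p i \<le> \<beta> i * p i" for i
    proof -
      have "(c - 1 + ub) * u1 i \<le> \<beta> i"
        using cases3[of i] hO[of i] inB(2,3)[of i] neg inB(1)[of i] mult_nonpos_nonneg[of "c - 1 + ub" "u1 i"] by auto
      then show ?thesis using p0[of i] by (rule mult_right_mono)
    qed
    have "(\<Sum>i\<in>UNIV. (c - 1 + ub) * u1 i * p i) \<le> c * P"
      unfolding mb[symmetric] by (rule sum_mono) (rule node)
    moreover have "(\<Sum>i\<in>UNIV. (c - 1 + ub) * u1 i * p i) = ((c - 1 + ub) * ub) * P"
    proof -
      have "(\<Sum>i\<in>UNIV. (c - 1 + ub) * u1 i * p i) = (c - 1 + ub) * (\<Sum>i\<in>UNIV. u1 i * p i)"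
        by (simp add: sum_distrib_left mult.assoc)
      then show ?thesis unfolding mu by simp
    qed
    ultimately have "(c - 1 + ub) * ub \<le> c" using Pp by simp
    then have "(1 - ub) * (- ub) \<le> (1 - ub) * c" by (simp add: algebra_simps)
    then have "- ub \<le> c" using ub0 mult_le_cancel_left_pos[of "1 - ub" "- ub" c] by simp
    then show False using \<open>\<not> - ub \<le> c\<close> by simp
  qed
  show ?thesis
  proof (intro allI)
    fix i
    show "avg w r u1 - 1 \<le> \<beta> i - avg w r \<beta> \<and> \<beta> i - avg w r \<beta> \<le> avg w r u1 \<and> -1 \<le> \<beta> i \<and> \<beta> i \<le> 1"
      unfolding ub_def[symmetric] c_def[symmetric]
      using cases3[of i] hZ[of i] hO[of i] inB(2,3,4)[of i] c1 c2 ub0 by auto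
  qed
qed

end
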